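(* Let $R$ be a finite commutative local ring and $G=\mathrm{GL}_n(R)$. For each $w\in W$, the map \[ \phi_w: e_{U^w}e_{V^w}\mathbb{C}[G]\to e_Ve_U\mathbb{C}[G],\qquad x\mapsto e_Vx, \] is a well-defined isomorphism of $\mathbb{C}[L]$-$\mathbb{C}[G]$ bimodules, where $U^w=w^{-1}Uw$, $V^w=w^{-1}Vw$.
   Context: $L$ is the subgroup of diagonal matrices, $U$ (resp. $V$) the subgroup of upper (resp. lower) unitriangular matrices, and $W$ the group of permutation matrices in $G$. For a subgroup $H\subseteq G$, $e_H=|H|^{-1}\sum_{h\in H}h\in\mathbb{C}[G]$. Since $L$ normalises $U,V,U^w,V^w$, the corresponding idempotents commute with $\mathbb{C}[L]$, so both spaces are $\mathbb{C}[L]$-$\mathbb{C}[G]$ bimodules under left and right multiplication. *)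

theory Defs
  imports Complex_Main "Jordan_Normal_Form.Matrix" "HOL-Combinatorics.Permutations"
begin

definition local_ring :: "'r::comm_ring_1 itself \<Rightarrow> bool" where
  "local_ring TYPE('r) \<longleftrightarrow> (0::'r) \<noteq> 1 \<and>
     (\<forall>a b :: 'r. \<not> a dvd 1 \<and> \<not> b dvd 1 \<longrightarrow> \<not> (a + b) dvd 1)"

definition GL :: "nat \<Rightarrow> 'r::comm_ring_1 mat set" where
  "GL n = {A \<in> carrier_mat n n. invertible_mat A}"

definition minv :: "'r::comm_ring_1 mat \<Rightarrow> 'r mat" where
  "minv A = (SOME B. inverts_mat A B \<and> inverts_mat B A)"

definition diag_grp :: "nat \<Rightarrow> 'r::comm_ring_1 mat set" where
  "diag_grp n = {A \<in> GL n. \<forall>i<n. \<forall>j<n. i \<noteq> j \<longrightarrow> A $$ (i,j) = 0}"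

definition upper_uni :: "nat \<Rightarrow> 'r::comm_ring_1 mat set" where
  "upper_uni n = {A \<in> GL n. (\<forall>i<n. A $$ (i,i) = 1) \<and> (\<forall>i<n. \<forall>j<n. j < i \<longrightarrow> A $$ (i,j) = 0)}"

definition lower_uni :: "nat \<Rightarrow> 'r::comm_ring_1 mat set" where
  "lower_uni n = {A \<in> GL n. (\<forall>i<n. A $$ (i,i) = 1) \<and> (\<forall>i<n. \<forall>j<n. i < j \<longrightarrow> A $$ (i,j) = 0)}"

definition perm_mats :: "nat \<Rightarrow> 'r::comm_ring_1 mat set" where
  "perm_mats n = {mat n n (\<lambda>(i,j). if i = \<sigma> j then 1 else 0) | \<sigma>. \<sigma> permutes {..<n}}"

definition conj_grp :: "'r::comm_ring_1 mat \<Rightarrow> 'r mat set \<Rightarrow> 'r mat set" where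
  "conj_grp w H = {minv w * h * w | h. h \<in> H}"

text \<open>The group algebra C[G]: complex-valued functions on G (extended by 0 outside G),
  with convolution product.\<close>
definition group_alg :: "'g set \<Rightarrow> ('g \<Rightarrow> complex) set" where
  "group_alg G = {f. \<forall>x. x \<notin> G \<longrightarrow> f x = 0}"

definition conv :: "'g::times set \<Rightarrow> ('g \<Rightarrow> complex) \<Rightarrow> ('g \<Rightarrow> complex) \<Rightarrow> 'g \<Rightarrow> complex" where
  "conv G f g = (\<lambda>x. \<Sum>y\<in>G. \<Sum>z\<in>G. if y * z = x then f y * g z else 0)"

text \<open>The idempotent e_H = |H|^{-1} \<Sum>_{h\<in>H} h\<close>
definition idem :: "'g set \<Rightarrow> 'g \<Rightarrow> complex" where
  "idem H = (\<lambda>x. if x \<in> H then 1 / of_nat (card H) else 0)"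

end

theory Submission
  imports Defs "HOL-Library.Function_Algebras" "Jordan_Normal_Form.Determinant"
begin

lemma inj_inj_surj:
  fixes s :: "'a::field \<Rightarrow> 'b::ab_group_add \<Rightarrow> 'b"
  assumes vs: "vector_space s" and lf: "Vector_Spaces.linear s s f" and lg: "Vector_Spaces.linear s s g"
    and sS: "module.subspace s S" and sT: "module.subspace s T"
    and F: "finite F" "S \<subseteq> module.span s F" "T \<subseteq> module.span s F"
    and fi: "inj_on f S" "f ` S \<subseteq> T" and gi: "inj_on g T" "g ` T \<subseteq> S"
  shows "f ` S = T"
proof -
  interpret vector_space s by fact
  interpret Fl: Vector_Spaces.linear s s f by fact
  interpret Gl: Vector_Spaces.linear s s g by fact
  obtain B where B: "B \<subseteq> S" "independent B" "S \<subseteq> span B"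
    using maximal_independent_subset[of S] by blast
  obtain C where C: "C \<subseteq> T" "independent C" "T \<subseteq> span C"
    using maximal_independent_subset[of T] by blast
  have spB: "span B = S" using B sS span_minimal by blast
  have spC: "span C = T" using C sT span_minimal by blast
  have fB: "finite B" using independent_span_bound[OF F(1) B(2)] B(1) F(2) by blast
  have fC: "finite C" using independent_span_bound[OF F(1) C(2)] C(1) F(3) by blast
  have iC: "independent (g ` C)"
    using Gl.independent_injective_image[OF C(2)] gi(1) spC by simp
  have "card (g ` C) \<le> card B"
    using independent_span_bound[OF fB iC] C(1) gi(2) B(3) by blast
  moreover have "card (g ` C) = card C"
    using card_image[OF inj_on_subset[OF gi(1) C(1)]] .
  ultimately have cCB: "card C \<le> card B" by simp
  have iB: "independent (f ` B)"
    using Fl.independent_injective_image[OF B(2)] fi(1) spB by simp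
  have cfB: "card (f ` B) = card B"
    using card_image[OF inj_on_subset[OF fi(1) B(1)]] .
  have "T \<subseteq> span (f ` B)"
  proof
    fix t assume t: "t \<in> T"
    show "t \<in> span (f ` B)"
    proof (rule ccontr)
      assume nt: "t \<notin> span (f ` B)"
      have ii: "independent (insert t (f ` B))" using independent_insertI[OF nt iB] .
      have "insert t (f ` B) \<subseteq> span C" using t fi(2) B(1) C(3) by blast
      then have "card (insert t (f ` B)) \<le> card C"
        using independent_span_bound[OF fC ii] by blast
      moreover have "t \<notin> f ` B" using nt span_base by blast
      ultimately show False using cfB cCB fB by simp
    qed
  qed
  also have "span (f ` B) = f ` span B" by (rule Fl.span_image)
  finally show ?thesis using spB fi(2) by blast
qed

locale fgrp =
  fixes G :: "'g::times set" and e :: 'g and iv :: "'g \<Rightarrow> 'g"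
  assumes fin: "finite G" and eG: "e \<in> G"
    and cl: "x \<in> G \<Longrightarrow> y \<in> G \<Longrightarrow> x * y \<in> G"
    and assoc: "x \<in> G \<Longrightarrow> y \<in> G \<Longrightarrow> z \<in> G \<Longrightarrow> x * y * z = x * (y * z)"
    and el: "x \<in> G \<Longrightarrow> e * x = x" and er: "x \<in> G \<Longrightarrow> x * e = x"
    and ivG: "x \<in> G \<Longrightarrow> iv x \<in> G" and ivl: "x \<in> G \<Longrightarrow> iv x * x = e"
    and ivr: "x \<in> G \<Longrightarrow> x * iv x = e"
begin

lemma ivl2: "x \<in> G \<Longrightarrow> z \<in> G \<Longrightarrow> iv x * (x * z) = z"
  by (metis assoc ivG ivl el)
lemma ivr2: "x \<in> G \<Longrightarrow> z \<in> G \<Longrightarrow> x * (iv x * z) = z"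
  by (metis assoc ivG ivr el)

lemma solve_l: assumes "x\<in>G" "y\<in>G" "z\<in>G" shows "x * z = y \<longleftrightarrow> z = iv x * y"
  using assms ivl2 ivr2 by metis

lemma iv_iv: assumes "x \<in> G" shows "iv (iv x) = x"
proof -
  have "iv x * x = e" using assms ivl by blast
  hence "x = iv (iv x) * e" using solve_l[of "iv x" e x] assms ivG eG by auto
  thus ?thesis using er assms ivG by metis
qed

lemma iv_mult: assumes "x \<in> G" "y \<in> G" shows "iv (x * y) = iv y * iv x"
proof -
  have "(x * y) * (iv y * iv x) = e" using assms
    by (metis assoc cl ivG ivr2 ivr)
  hence "iv y * iv x = iv (x*y) * e" using solve_l[of "x*y" e "iv y * iv x"] assms ivG cl eG by auto
  thus ?thesis using er assms ivG cl by metis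
qed

lemmas gsimps = assoc cl ivG ivl ivr el er ivl2 ivr2 iv_iv iv_mult

lemma bij_mult_left: "a \<in> G \<Longrightarrow> bij_betw (\<lambda>t. a * t) G G"
  by (rule bij_betw_byWitness[where f'="\<lambda>y. iv a * y"]) (auto simp: gsimps)

lemma bij_iv: "bij_betw iv G G"
  by (rule bij_betw_byWitness[where f'=iv]) (auto simp: gsimps)

lemma bij_conv2: "x \<in> G \<Longrightarrow> bij_betw (\<lambda>z. x * iv z) G G"
  by (rule bij_betw_byWitness[where f'="\<lambda>y. iv y * x"]) (auto simp: gsimps)

lemma conv_eq: assumes x: "x \<in> G" shows "conv G f g x = (\<Sum>y\<in>G. f y * g (iv y * x))"
  unfolding conv_def
proof (rule sum.cong[OF refl])
  fix y assume y: "y \<in> G"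
  have "(\<Sum>z\<in>G. if y * z = x then f y * g z else 0) = (\<Sum>z\<in>G. if z = iv y * x then f y * g z else 0)"
    by (rule sum.cong[OF refl]) (use y x solve_l in auto)
  also have "\<dots> = f y * g (iv y * x)" using y x fin by (simp add: gsimps)
  finally show "(\<Sum>z\<in>G. if y * z = x then f y * g z else 0) = f y * g (iv y * x)" .
qed

lemma conv_out: "x \<notin> G \<Longrightarrow> conv G f g x = 0"
  unfolding conv_def by (rule sum.neutral) (auto intro!: sum.neutral dest: cl)

lemma conv_ga: "conv G f g \<in> group_alg G"
  unfolding group_alg_def using conv_out by blast

lemma conv_eq2: assumes x: "x \<in> G" shows "conv G f g x = (\<Sum>z\<in>G. f (x * iv z) * g z)"
proof -
  have "conv G f g x = (\<Sum>y\<in>G. f y * g (iv y * x))" using conv_eq[OF x] .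
  also have "\<dots> = (\<Sum>z\<in>G. f (x * iv z) * g (iv (x * iv z) * x))"
    using sum.reindex_bij_betw[OF bij_conv2[OF x], of "\<lambda>y. f y * g (iv y * x)"] by simp
  also have "\<dots> = (\<Sum>z\<in>G. f (x * iv z) * g z)"
    by (rule sum.cong[OF refl]) (use x in \<open>simp add: gsimps\<close>)
  finally show ?thesis .
qed

lemma conv_assoc: "conv G (conv G f g) h = conv G f (conv G g h)"
proof (rule ext)
  fix x show "conv G (conv G f g) h x = conv G f (conv G g h) x"
  proof (cases "x \<in> G")
    case False thus ?thesis by (simp add: conv_out)
  next
    case True
    have "conv G (conv G f g) h x = (\<Sum>y\<in>G. (\<Sum>a\<in>G. f a * g (iv a * y)) * h (iv y * x))"
      using True by (simp add: conv_eq cong: sum.cong)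
    also have "\<dots> = (\<Sum>a\<in>G. \<Sum>y\<in>G. f a * g (iv a * y) * h (iv y * x))"
      unfolding sum_distrib_right by (rule sum.swap)
    also have "\<dots> = (\<Sum>a\<in>G. f a * (\<Sum>y\<in>G. g (iv a * y) * h (iv y * x)))"
      by (simp add: sum_distrib_left mult.assoc)
    also have "\<dots> = (\<Sum>a\<in>G. f a * (\<Sum>t\<in>G. g t * h (iv t * (iv a * x))))"
    proof (rule sum.cong[OF refl])
      fix a assume a: "a \<in> G"
      have "(\<Sum>y\<in>G. g (iv a * y) * h (iv y * x)) = (\<Sum>t\<in>G. g (iv a * (a * t)) * h (iv (a * t) * x))"
        using sum.reindex_bij_betw[OF bij_mult_left[OF a], of "\<lambda>y. g (iv a * y) * h (iv y * x)"] by simp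
      also have "\<dots> = (\<Sum>t\<in>G. g t * h (iv t * (iv a * x)))"
        by (rule sum.cong[OF refl]) (use a True in \<open>simp add: gsimps\<close>)
      finally show "f a * (\<Sum>y\<in>G. g (iv a * y) * h (iv y * x)) = f a * (\<Sum>t\<in>G. g t * h (iv t * (iv a * x)))"
        by simp
    qed
    also have "\<dots> = conv G f (conv G g h) x"
      using True by (simp add: conv_eq gsimps cong: sum.cong)
    finally show ?thesis .
  qed
qed

lemma conv_add_r: "conv G f (\<lambda>x. g x + h x) = (\<lambda>x. conv G f g x + conv G f h x)"
  by (rule ext, case_tac "x \<in> G") (simp_all add: conv_eq conv_out sum.distrib distrib_left)

lemma conv_scale_r: "conv G f (\<lambda>x. c * g x) = (\<lambda>x. c * conv G f g x)"
  by (rule ext, case_tac "x \<in> G") (simp_all add: conv_eq conv_out sum_distrib_left mult_ac)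

lemma conv_zero_r: "conv G f (\<lambda>x. 0) = (\<lambda>x. 0)"
  by (rule ext, case_tac "x \<in> G") (simp_all add: conv_eq conv_out)

lemma conv_diff_r: "conv G f (\<lambda>x. g x - h x) = (\<lambda>x. conv G f g x - conv G f h x)"
  by (rule ext, case_tac "x \<in> G") (simp_all add: conv_eq conv_out sum_subtractf right_diff_distrib)

definition sg :: "'g set \<Rightarrow> bool" where
  "sg H \<longleftrightarrow> H \<subseteq> G \<and> e \<in> H \<and> (\<forall>x\<in>H. \<forall>y\<in>H. x * y \<in> H) \<and> (\<forall>x\<in>H. iv x \<in> H)"

lemma sg_closed:
  assumes H: "H \<subseteq> G" "e \<in> H" "\<And>x y. x \<in> H \<Longrightarrow> y \<in> H \<Longrightarrow> x * y \<in> H"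
  shows "sg H"
proof -
  have fH: "finite H" using H(1) fin finite_subset by blast
  have "iv x \<in> H" if x: "x \<in> H" for x
  proof -
    have "inj_on (\<lambda>y. x * y) H"
      by (rule inj_onI) (metis x H(1) subsetD ivl2)
    moreover have "(\<lambda>y. x * y) ` H \<subseteq> H" using H(3) x by blast
    ultimately have "(\<lambda>y. x * y) ` H = H" using endo_inj_surj[OF fH] by blast
    then obtain y where y: "y \<in> H" "x * y = e" using H(2) by (metis imageE)
    then have "y = iv x * e" using solve_l[of x e y] x H(1) eG by blast
    then show ?thesis using y x H(1) er ivG by (metis subsetD)
  qed
  thus ?thesis unfolding sg_def using H by blast
qed

lemma sgD: assumes "sg H" shows "H \<subseteq> G" "e \<in> H" "x \<in> H \<Longrightarrow> y \<in> H \<Longrightarrow> x * y \<in> H" "x \<in> H \<Longrightarrow> iv x \<in> H"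
  using assms unfolding sg_def by blast+

lemma sg_card: "sg H \<Longrightarrow> card H > 0"
  using sgD(1,2) fin finite_subset by (metis card_gt_0_iff empty_iff)

lemma sg_iv_iff: "sg H \<Longrightarrow> y \<in> G \<Longrightarrow> iv y \<in> H \<longleftrightarrow> y \<in> H"
  by (metis iv_iv sgD(4))

lemma sum_restrict: "(\<Sum>z\<in>G. a z * idem K z) = (\<Sum>z\<in>K. a z) / of_nat (card K)" if "K \<subseteq> G"
proof -
  have "(\<Sum>z\<in>G. a z * idem K z) = (\<Sum>z\<in>G. if z \<in> K then a z / of_nat (card K) else 0)"
    by (rule sum.cong) (auto simp: idem_def)
  also have "\<dots> = (\<Sum>z\<in>G \<inter> K. a z / of_nat (card K))"
    by (simp add: sum.inter_restrict[OF fin])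
  also have "G \<inter> K = K" using that by blast
  finally show ?thesis by (simp add: sum_divide_distrib)
qed

lemma sum_restrict': "(\<Sum>z\<in>G. idem K z * a z) = (\<Sum>z\<in>K. a z) / of_nat (card K)" if "K \<subseteq> G"
  using sum_restrict[OF that, of a] by (simp add: mult.commute)

lemma idem_out: "sg H \<Longrightarrow> x \<notin> G \<Longrightarrow> idem H x = 0"
  using sgD(1) unfolding idem_def by auto

lemma idem_absorb1: assumes H: "sg H" and K: "sg K" and KH: "K \<subseteq> H"
  shows "conv G (idem H) (idem K) = idem H"
proof (rule ext)
  fix x show "conv G (idem H) (idem K) x = idem H x"
  proof (cases "x \<in> G")
    case False thus ?thesis using idem_out[OF H] conv_out by simp
  next
    case True
    have "conv G (idem H) (idem K) x = (\<Sum>z\<in>K. idem H (x * iv z)) / of_nat (card K)"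
      using conv_eq2[OF True] sum_restrict[OF sgD(1)[OF K]] by simp
    also have "\<dots> = (\<Sum>z\<in>K. idem H x) / of_nat (card K)"
    proof -
      have "idem H (x * iv z) = idem H x" if z: "z \<in> K" for z
      proof -
        have zG: "z \<in> G" "z \<in> H" using z KH sgD(1)[OF K] by auto
        have "x * iv z \<in> H \<longleftrightarrow> x \<in> H"
        proof
          assume "x * iv z \<in> H"
          then have "x * iv z * z \<in> H" using sgD(3)[OF H _ zG(2)] by blast
          thus "x \<in> H" using zG True by (simp add: gsimps)
        next
          assume "x \<in> H" thus "x * iv z \<in> H" using sgD(3)[OF H _ sgD(4)[OF H zG(2)]] by blast
        qed
        thus ?thesis unfolding idem_def by simp
      qed
      thus ?thesis by simp
    qed
    also have "\<dots> = idem H x" using sg_card[OF K] by simp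
    finally show ?thesis .
  qed
qed

lemma idem_absorb2: assumes H: "sg H" and K: "sg K" and KH: "K \<subseteq> H"
  shows "conv G (idem K) (idem H) = idem H"
proof (rule ext)
  fix x show "conv G (idem K) (idem H) x = idem H x"
  proof (cases "x \<in> G")
    case False thus ?thesis using idem_out[OF H] conv_out by simp
  next
    case True
    have "conv G (idem K) (idem H) x = (\<Sum>z\<in>K. idem H (iv z * x)) / of_nat (card K)"
      using conv_eq[OF True] sum_restrict'[OF sgD(1)[OF K]] by simp
    also have "\<dots> = (\<Sum>z\<in>K. idem H x) / of_nat (card K)"
    proof -
      have "idem H (iv z * x) = idem H x" if z: "z \<in> K" for z
      proof -
        have zG: "z \<in> G" "z \<in> H" using z KH sgD(1)[OF K] by auto
        have "iv z * x \<in> H \<longleftrightarrow> x \<in> H"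
        proof
          assume "iv z * x \<in> H"
          then have "z * (iv z * x) \<in> H" using sgD(3)[OF H zG(2)] by blast
          thus "x \<in> H" using zG True by (simp add: gsimps)
        next
          assume "x \<in> H" thus "iv z * x \<in> H" using sgD(3)[OF H sgD(4)[OF H zG(2)]] by blast
        qed
        thus ?thesis unfolding idem_def by simp
      qed
      thus ?thesis by simp
    qed
    also have "\<dots> = idem H x" using sg_card[OF K] by simp
    finally show ?thesis .
  qed
qed


lemma idem_idem: "sg H \<Longrightarrow> conv G (idem H) (idem H) = idem H"
  using idem_absorb1 by blast

lemma idem_prod:
  assumes H: "sg H" and K: "sg K" and X: "sg X" and HX: "H \<subseteq> X" and KX: "K \<subseteq> X"
    and HK: "H \<inter> K = {e}" and cX: "card X = card H * card K"
  shows "conv G (idem H) (idem K) = idem X"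
proof -
  have HG: "H \<subseteq> G" and KG: "K \<subseteq> G" and XG: "X \<subseteq> G" using sgD(1) H K X by auto
  have fH: "finite H" using HG fin finite_subset by blast
  have fK: "finite K" using KG fin finite_subset by blast
  have fX: "finite X" using XG fin finite_subset by blast
  have uniq: "h = h'" if hh: "h\<in>H" "h'\<in>H" "k\<in>K" "k'\<in>K" "h*k = h'*k'" for h h' k k'
  proof -
    have hG: "h\<in>G" "h'\<in>G" "k\<in>G" "k'\<in>G" using hh HG KG by auto
    have "iv h' * h = iv h' * (h * (k * iv k))" by (simp only: ivr[OF hG(3)] er[OF hG(1)])
    also have "\<dots> = iv h' * (h * k * iv k)" by (simp only: assoc[OF hG(1) hG(3) ivG[OF hG(3)]])
    also have "\<dots> = iv h' * (h' * k' * iv k)" by (simp only: hh(5))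
    also have "\<dots> = iv h' * (h' * (k' * iv k))" by (simp only: assoc[OF hG(2) hG(4) ivG[OF hG(3)]])
    also have "\<dots> = k' * iv k" by (rule ivl2[OF hG(2) cl[OF hG(4) ivG[OF hG(3)]]])
    finally have eq: "iv h' * h = k' * iv k" .
    moreover have "iv h' * h \<in> H" by (rule sgD(3)[OF H sgD(4)[OF H hh(2)] hh(1)])
    moreover have "k' * iv k \<in> K" by (rule sgD(3)[OF K hh(4) sgD(4)[OF K hh(3)]])
    ultimately have "iv h' * h \<in> H \<inter> K" by simp
    hence "iv h' * h = e" unfolding HK by simp
    thus ?thesis using hG by (metis ivr2 er)
  qed
  let ?P = "(\<lambda>(h,k). h*k) ` (H \<times> K)"
  have inj: "inj_on (\<lambda>(h,k). h*k) (H \<times> K)"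
  proof (rule inj_onI, clarify)
    fix h k h' k' assume a: "h\<in>H" "k\<in>K" "h'\<in>H" "k'\<in>K" "h*k = h'*k'"
    have "h = h'" using uniq a by blast
    moreover have "k = k'"
    proof -
      have hG: "h \<in> G" "k \<in> G" "k' \<in> G" using a HG KG by auto
      have "k = iv h * (h * k)" using ivl2 hG by simp
      also have "\<dots> = iv h * (h' * k')" using a(5) by simp
      also have "\<dots> = k'" using \<open>h = h'\<close> ivl2 hG by simp
      finally show ?thesis .
    qed
    ultimately show "h = h' \<and> k = k'" by blast
  qed
  have "card ?P = card H * card K" using card_image[OF inj] card_cartesian_product by simp
  moreover have "?P \<subseteq> X" using HX KX sgD(3)[OF X] by auto
  ultimately have PX: "?P = X" using card_subset_eq[OF fX] cX by metis
  show ?thesis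
  proof (rule ext)
    fix x show "conv G (idem H) (idem K) x = idem X x"
    proof (cases "x \<in> G")
      case False thus ?thesis using idem_out[OF X] conv_out by simp
    next
      case True
      have c: "conv G (idem H) (idem K) x = (\<Sum>y\<in>H. idem K (iv y * x)) / of_nat (card H)"
        using conv_eq[OF True] sum_restrict'[OF HG] by simp
      show ?thesis
      proof (cases "x \<in> X")
        case xX: True
        have "x \<in> ?P" using xX PX by simp
        then obtain h0 k0 where hk: "h0 \<in> H" "k0 \<in> K" "x = h0 * k0" by auto
        have "(\<Sum>y\<in>H. idem K (iv y * x)) = (\<Sum>y\<in>H. if y = h0 then 1 / of_nat (card K) else 0)"
        proof (rule sum.cong[OF refl])
          fix y assume y: "y \<in> H"
          have "iv y * x \<in> K \<longleftrightarrow> y = h0"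
          proof
            assume k: "iv y * x \<in> K"
            have "y * (iv y * x) = h0 * k0" using y HG True hk subsetD[OF HG y] by (simp add: gsimps)
            thus "y = h0" using uniq[OF y hk(1) k hk(2)] by blast
          next
            assume "y = h0" thus "iv y * x \<in> K" using hk subsetD[OF HG hk(1)] subsetD[OF KG hk(2)] by (simp add: gsimps)
          qed
          thus "idem K (iv y * x) = (if y = h0 then 1 / of_nat (card K) else 0)"
            unfolding idem_def by simp
        qed
        also have "\<dots> = 1 / of_nat (card K)" using hk(1) fH by simp
        finally show ?thesis using c xX cX unfolding idem_def by simp
      next
        case xX: False
        have "idem K (iv y * x) = 0" if y: "y \<in> H" for y
        proof -
          have "iv y * x \<notin> K"
          proof
            assume k: "iv y * x \<in> K"
            have "y * (iv y * x) \<in> ?P" by (rule image_eqI[where x="(y, iv y * x)"]) (use y k in auto)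
            thus False using xX PX y subsetD[OF HG y] True by (simp add: gsimps)
          qed
          thus ?thesis unfolding idem_def by simp
        qed
        thus ?thesis using c xX unfolding idem_def by simp
      qed
    qed
  qed
qed

definition ip :: "('g \<Rightarrow> complex) \<Rightarrow> ('g \<Rightarrow> complex) \<Rightarrow> complex" where
  "ip f g = (\<Sum>x\<in>G. f x * cnj (g x))"

lemma ip_idem: assumes H: "sg H" shows "ip (conv G (idem H) f) g = ip f (conv G (idem H) g)"
proof -
  have cj: "cnj (idem H y) = idem H y" for y by (simp add: idem_def)
  have "ip (conv G (idem H) f) g = (\<Sum>x\<in>G. (\<Sum>y\<in>G. idem H y * f (iv y * x)) * cnj (g x))"
    unfolding ip_def by (simp add: conv_eq cong: sum.cong)
  also have "\<dots> = (\<Sum>x\<in>G. \<Sum>y\<in>G. idem H y * (f (iv y * x) * cnj (g x)))"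
    by (simp add: sum_distrib_right mult.assoc)
  also have "\<dots> = (\<Sum>y\<in>G. \<Sum>x\<in>G. idem H y * (f (iv y * x) * cnj (g x)))"
    by (rule sum.swap)
  also have "\<dots> = (\<Sum>y\<in>G. idem H y * (\<Sum>x\<in>G. f (iv y * x) * cnj (g x)))"
    by (simp add: sum_distrib_left)
  also have "\<dots> = (\<Sum>y\<in>G. idem H y * (\<Sum>t\<in>G. f t * cnj (g (y * t))))"
  proof (rule sum.cong[OF refl])
    fix y assume y: "y \<in> G"
    have "(\<Sum>x\<in>G. f (iv y * x) * cnj (g x)) = (\<Sum>t\<in>G. f (iv y * (y * t)) * cnj (g (y * t)))"
      using sum.reindex_bij_betw[OF bij_mult_left[OF y], of "\<lambda>x. f (iv y * x) * cnj (g x)"] by simp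
    also have "\<dots> = (\<Sum>t\<in>G. f t * cnj (g (y * t)))"
      by (rule sum.cong[OF refl]) (use y in \<open>simp add: gsimps\<close>)
    finally show "idem H y * (\<Sum>x\<in>G. f (iv y * x) * cnj (g x)) = idem H y * (\<Sum>t\<in>G. f t * cnj (g (y * t)))"
      by simp
  qed
  finally have L: "ip (conv G (idem H) f) g = (\<Sum>y\<in>G. idem H y * (\<Sum>t\<in>G. f t * cnj (g (y * t))))" .
  have "ip f (conv G (idem H) g) = (\<Sum>x\<in>G. f x * cnj (\<Sum>y\<in>G. idem H y * g (iv y * x)))"
    unfolding ip_def by (simp add: conv_eq cong: sum.cong)
  also have "\<dots> = (\<Sum>x\<in>G. \<Sum>y\<in>G. idem H y * (f x * cnj (g (iv y * x))))"
    by (simp add: sum_distrib_left cj mult_ac)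
  also have "\<dots> = (\<Sum>y\<in>G. \<Sum>x\<in>G. idem H y * (f x * cnj (g (iv y * x))))"
    by (rule sum.swap)
  also have "\<dots> = (\<Sum>y\<in>G. idem H y * (\<Sum>x\<in>G. f x * cnj (g (iv y * x))))"
    by (simp add: sum_distrib_left)
  also have "\<dots> = (\<Sum>y\<in>G. idem H (iv y) * (\<Sum>x\<in>G. f x * cnj (g (iv (iv y) * x))))"
    using sum.reindex_bij_betw[OF bij_iv, of "\<lambda>y. idem H y * (\<Sum>x\<in>G. f x * cnj (g (iv y * x)))"] by simp
  also have "\<dots> = (\<Sum>y\<in>G. idem H y * (\<Sum>x\<in>G. f x * cnj (g (y * x))))"
  proof (rule sum.cong[OF refl])
    fix y assume y: "y \<in> G"
    have "idem H (iv y) = idem H y" using sg_iv_iff[OF H y] unfolding idem_def by simp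
    thus "idem H (iv y) * (\<Sum>x\<in>G. f x * cnj (g (iv (iv y) * x))) = idem H y * (\<Sum>x\<in>G. f x * cnj (g (y * x)))"
      using y by (simp add: iv_iv)
  qed
  finally show ?thesis using L by simp
qed

lemma ip_zero_r: "ip f (\<lambda>x. 0) = 0"
  unfolding ip_def by simp

lemma ip_self_zero: assumes f: "f \<in> group_alg G" and z: "ip f f = 0" shows "f = (\<lambda>x. 0)"
proof -
  have "ip f f = of_real (\<Sum>x\<in>G. (cmod (f x))^2)"
    unfolding ip_def of_real_sum by (rule sum.cong[OF refl]) (rule complex_norm_square[symmetric])
  hence "(\<Sum>x\<in>G. (cmod (f x))^2) = 0" using z by (metis of_real_eq_0_iff)
  hence "\<forall>x\<in>G. (cmod (f x))^2 = 0" using sum_nonneg_eq_0_iff[OF fin, of "\<lambda>x. (cmod (f x))^2"] by simp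
  hence "\<forall>x\<in>G. f x = 0" by simp
  thus ?thesis using f unfolding group_alg_def by auto
qed

lemma idem_comm:
  assumes L: "sg L" and H: "sg H" and inv: "\<And>d h. d \<in> L \<Longrightarrow> h \<in> H \<Longrightarrow> d * h * iv d \<in> H"
    and l: "l \<in> group_alg L"
  shows "conv G l (idem H) = conv G (idem H) l"
proof (rule ext)
  fix x show "conv G l (idem H) x = conv G (idem H) l x"
  proof (cases "x \<in> G")
    case False thus ?thesis by (simp add: conv_out)
  next
    case True
    have "conv G l (idem H) x = (\<Sum>y\<in>G. l y * idem H (iv y * x))" using conv_eq[OF True] .
    also have "\<dots> = (\<Sum>y\<in>G. idem H (x * iv y) * l y)"
    proof (rule sum.cong[OF refl])
      fix y assume y: "y \<in> G"
      show "l y * idem H (iv y * x) = idem H (x * iv y) * l y"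
      proof (cases "y \<in> L")
        case False thus ?thesis using l unfolding group_alg_def by simp
      next
        case yL: True
        have yiL: "iv y \<in> L" using sgD(4)[OF L yL] .
        have eq: "y * (iv y * x) * iv y = x * iv y" using y True by (simp add: gsimps)
        have "iv y * x \<in> H \<longleftrightarrow> x * iv y \<in> H"
        proof
          assume "iv y * x \<in> H" thus "x * iv y \<in> H" using inv[OF yL] eq by metis
        next
          assume a: "x * iv y \<in> H"
          have "iv y * (x * iv y) * iv (iv y) \<in> H" using inv[OF yiL a] .
          moreover have "iv y * (x * iv y) * iv (iv y) = iv y * x" using y True by (simp add: gsimps)
          ultimately show "iv y * x \<in> H" by simp
        qed
        thus ?thesis unfolding idem_def by simp
      qed
    qed
    also have "\<dots> = conv G (idem H) l x" using conv_eq2[OF True] by simp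
    finally show ?thesis .
  qed
qed

lemma sum_fun_apply: "(sum h A) x = (\<Sum>a\<in>A. h a x)"
  by (induct A rule: infinite_finite_induct) (simp_all add: zero_fun_def plus_fun_def)


abbreviation cv (infixl "\<star>" 70) where "f \<star> g \<equiv> conv G f g"

lemma absorb1R: "sg H \<Longrightarrow> sg K \<Longrightarrow> K \<subseteq> H \<Longrightarrow> idem H \<star> (idem K \<star> X) = idem H \<star> X"
  by (metis conv_assoc idem_absorb1)
lemma absorb2R: "sg H \<Longrightarrow> sg K \<Longrightarrow> K \<subseteq> H \<Longrightarrow> idem K \<star> (idem H \<star> X) = idem H \<star> X"
  by (metis conv_assoc idem_absorb2)
lemma decR: "A \<star> B = C \<Longrightarrow> A \<star> (B \<star> X) = C \<star> X"
  by (metis conv_assoc)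

lemma main_abs:
  assumes sU: "sg U" and sV: "sg V" and sUw: "sg Uw" and sVw: "sg Vw" and sB1: "sg B1" and sB2: "sg B2"
    and sC1: "sg C1" and sC2: "sg C2" and sL: "sg L"
    and sub1: "B2 \<subseteq> V" and sub2: "B2 \<subseteq> Uw" and sub3: "C2 \<subseteq> V" and sub4: "C2 \<subseteq> Vw"
    and dUw: "idem B2 \<star> idem B1 = idem Uw" and dVw: "idem C1 \<star> idem C2 = idem Vw"
    and dU: "idem B1 \<star> idem C1 = idem U" and dV: "idem C2 \<star> idem B2 = idem V"
    and invV: "\<And>d h. d \<in> L \<Longrightarrow> h \<in> V \<Longrightarrow> d * h * iv d \<in> V"
    and invUw: "\<And>d h. d \<in> L \<Longrightarrow> h \<in> Uw \<Longrightarrow> d * h * iv d \<in> Uw"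
    and invVw: "\<And>d h. d \<in> L \<Longrightarrow> h \<in> Vw \<Longrightarrow> d * h * iv d \<in> Vw"
  defines "S \<equiv> {conv G (conv G (idem Uw) (idem Vw)) x | x. x \<in> group_alg G}"
  defines "T \<equiv> {conv G (conv G (idem V) (idem U)) x | x. x \<in> group_alg G}"
  defines "\<phi> \<equiv> (\<lambda>x. conv G (idem V) x)"
  shows "(\<forall>x\<in>S. \<phi> x \<in> T)
    \<and> bij_betw \<phi> S T
    \<and> (\<forall>x\<in>S. \<forall>y\<in>S. \<phi> (\<lambda>g. x g + y g) = (\<lambda>g. \<phi> x g + \<phi> y g))
    \<and> (\<forall>c::complex. \<forall>x\<in>S. \<phi> (\<lambda>g. c * x g) = (\<lambda>g. c * \<phi> x g))
    \<and> (\<forall>l\<in>group_alg L. \<forall>x\<in>S. \<forall>a\<in>group_alg G.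
          conv G (conv G l x) a \<in> S \<and> \<phi> (conv G (conv G l x) a) = conv G (conv G l (\<phi> x)) a)"
proof -
  note A = conv_assoc
  have k1: "idem V \<star> (idem Uw \<star> X) = idem V \<star> (idem B1 \<star> X)" for X
  proof -
    have "idem V \<star> (idem Uw \<star> X) = idem V \<star> (idem B2 \<star> (idem B1 \<star> X))"
      using decR[OF dUw] by simp
    also have "\<dots> = idem V \<star> (idem B1 \<star> X)" using absorb1R[OF sV sB2 sub1] .
    finally show ?thesis .
  qed
  have k2: "idem B1 \<star> (idem Vw \<star> X) = idem U \<star> (idem C2 \<star> X)" for X
    using decR[OF dVw, of X] decR[OF dU, of "idem C2 \<star> X"] by simp
  have part1: "\<phi> x \<in> T" if "x \<in> S" for x
  proof -
    obtain a where a: "a \<in> group_alg G" "x = idem Uw \<star> idem Vw \<star> a" using \<open>x \<in> S\<close> unfolding S_def by blast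
    have "\<phi> x = idem V \<star> (idem Uw \<star> (idem Vw \<star> a))" unfolding \<phi>_def a by (simp add: A)
    also have "\<dots> = idem V \<star> idem U \<star> (idem C2 \<star> a)" using k1 k2 by (simp add: A)
    finally show ?thesis unfolding T_def using conv_ga by blast
  qed
  have z0: "x = (\<lambda>_. 0)" if "x \<in> S" "\<phi> x = (\<lambda>_. 0)" for x
  proof -
    obtain a where a: "a \<in> group_alg G" "x = idem Uw \<star> idem Vw \<star> a" using \<open>x \<in> S\<close> unfolding S_def by blast
    define z where "z = idem Uw \<star> (idem Vw \<star> a)"
    have xz: "x = z" unfolding z_def a by (simp add: A)
    have "idem V \<star> z = idem C2 \<star> (idem B2 \<star> z)" using decR[OF dV] by simp
    also have "idem B2 \<star> z = z" unfolding z_def using absorb2R[OF sUw sB2 sub2] .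
    finally have e1: "idem V \<star> z = idem C2 \<star> z" .
    have "idem Vw \<star> z = idem Vw \<star> (idem C2 \<star> z)" using absorb1R[OF sVw sC2 sub4] by simp
    also have "\<dots> = idem Vw \<star> (\<lambda>_. 0)" using e1 that(2) xz unfolding \<phi>_def by simp
    finally have e2: "idem Vw \<star> z = (\<lambda>_. 0)" using conv_zero_r by simp
    have e3: "idem Uw \<star> z = z" unfolding z_def using absorb1R[OF sUw sUw] by simp
    have "ip z z = ip (idem Vw \<star> a) (idem Uw \<star> z)" unfolding z_def[of] using ip_idem[OF sUw] z_def by simp
    also have "\<dots> = ip (idem Vw \<star> a) z" using e3 by simp
    also have "\<dots> = ip a (idem Vw \<star> z)" using ip_idem[OF sVw] by simp
    also have "\<dots> = 0" using e2 ip_zero_r by simp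
    finally show ?thesis using ip_self_zero[OF conv_ga] xz z_def by simp
  qed
  have z1: "y = (\<lambda>_. 0)" if "y \<in> T" "idem Uw \<star> idem Vw \<star> y = (\<lambda>_. 0)" for y
  proof -
    obtain b where b: "b \<in> group_alg G" "y = idem V \<star> idem U \<star> b" using \<open>y \<in> T\<close> unfolding T_def by blast
    have yb: "y = idem V \<star> (idem U \<star> b)" using b by (simp add: A)
    have "idem Vw \<star> y = idem C1 \<star> (idem C2 \<star> y)" using decR[OF dVw] by simp
    also have "idem C2 \<star> y = y" unfolding yb using absorb2R[OF sV sC2 sub3] .
    finally have e1: "idem Vw \<star> y = idem C1 \<star> y" .
    have "idem Uw \<star> (idem C1 \<star> y) = idem B2 \<star> (idem B1 \<star> (idem C1 \<star> y))" using decR[OF dUw] by simp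
    also have "\<dots> = idem B2 \<star> (idem U \<star> y)" using decR[OF dU] by simp
    finally have e2: "idem B2 \<star> (idem U \<star> y) = (\<lambda>_. 0)" using that(2) e1 by (simp add: A)
    have "idem V \<star> (idem U \<star> y) = idem V \<star> (idem B2 \<star> (idem U \<star> y))" using absorb1R[OF sV sB2 sub1] by simp
    also have "\<dots> = (\<lambda>_. 0)" using e2 conv_zero_r by simp
    finally have u: "idem V \<star> (idem U \<star> y) = (\<lambda>_. 0)" .
    have yV: "idem V \<star> y = y" unfolding yb using absorb1R[OF sV sV] by simp
    have "ip (idem U \<star> y) (idem U \<star> y) = ip y (idem U \<star> (idem U \<star> y))" using ip_idem[OF sU] by simp
    also have "\<dots> = ip y (idem U \<star> y)" using absorb1R[OF sU sU] by simp
    also have "\<dots> = ip (idem V \<star> y) (idem U \<star> y)" using yV by simp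
    also have "\<dots> = ip y (idem V \<star> (idem U \<star> y))" using ip_idem[OF sV] by simp
    also have "\<dots> = 0" using u ip_zero_r by simp
    finally have uy: "idem U \<star> y = (\<lambda>_. 0)" using ip_self_zero[OF conv_ga] by simp
    have "ip y y = ip (idem U \<star> b) (idem V \<star> y)" unfolding yb[of] using ip_idem[OF sV] yb by simp
    also have "\<dots> = ip (idem U \<star> b) y" using yV by simp
    also have "\<dots> = ip b (idem U \<star> y)" using ip_idem[OF sU] by simp
    also have "\<dots> = 0" using uy ip_zero_r by simp
    finally show ?thesis using ip_self_zero[OF conv_ga] yb by simp
  qed
  have Sga: "S \<subseteq> group_alg G" unfolding S_def using conv_ga by blast
  have Tga: "T \<subseteq> group_alg G" unfolding T_def using conv_ga by blast
  have diffS: "(\<lambda>g. x g - y g) \<in> S" if "x \<in> S" "y \<in> S" for x y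
  proof -
    obtain a where a: "a \<in> group_alg G" "x = idem Uw \<star> idem Vw \<star> a" using \<open>x \<in> S\<close> unfolding S_def by blast
    obtain b where b: "b \<in> group_alg G" "y = idem Uw \<star> idem Vw \<star> b" using \<open>y \<in> S\<close> unfolding S_def by blast
    have "(\<lambda>g. x g - y g) = idem Uw \<star> idem Vw \<star> (\<lambda>g. a g - b g)" using a b conv_diff_r by simp
    moreover have "(\<lambda>g. a g - b g) \<in> group_alg G" using a b unfolding group_alg_def by auto
    ultimately show ?thesis unfolding S_def by blast
  qed
  have diffT: "(\<lambda>g. x g - y g) \<in> T" if "x \<in> T" "y \<in> T" for x y
  proof -
    obtain a where a: "a \<in> group_alg G" "x = idem V \<star> idem U \<star> a" using \<open>x \<in> T\<close> unfolding T_def by blast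
    obtain b where b: "b \<in> group_alg G" "y = idem V \<star> idem U \<star> b" using \<open>y \<in> T\<close> unfolding T_def by blast
    have "(\<lambda>g. x g - y g) = idem V \<star> idem U \<star> (\<lambda>g. a g - b g)" using a b conv_diff_r by simp
    moreover have "(\<lambda>g. a g - b g) \<in> group_alg G" using a b unfolding group_alg_def by auto
    ultimately show ?thesis unfolding T_def by blast
  qed
  have injS: "inj_on \<phi> S"
  proof (rule inj_onI)
    fix x y assume xy: "x \<in> S" "y \<in> S" "\<phi> x = \<phi> y"
    have "\<phi> (\<lambda>g. x g - y g) = (\<lambda>_. 0)" using xy(3) unfolding \<phi>_def conv_diff_r by simp
    hence "(\<lambda>g. x g - y g) = (\<lambda>_. 0)" using z0 diffS[OF xy(1,2)] by blast
    thus "x = y" by (simp add: fun_eq_iff)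
  qed
  define \<psi> where "\<psi> = (\<lambda>x. idem Uw \<star> idem Vw \<star> x)"
  have injT: "inj_on \<psi> T"
  proof (rule inj_onI)
    fix x y assume xy: "x \<in> T" "y \<in> T" "\<psi> x = \<psi> y"
    have "\<psi> (\<lambda>g. x g - y g) = (\<lambda>_. 0)" using xy(3) unfolding \<psi>_def conv_diff_r by simp
    hence "(\<lambda>g. x g - y g) = (\<lambda>_. 0)" using z1 diffT[OF xy(1,2)] unfolding \<psi>_def by blast
    thus "x = y" by (simp add: fun_eq_iff)
  qed
  have psiT: "\<psi> ` T \<subseteq> S" unfolding \<psi>_def S_def using Tga by blast
  have phiS: "\<phi> ` S \<subseteq> T" using part1 by blast
  define s where "s = (\<lambda>(c::complex) (f::'g \<Rightarrow> complex) x. c * f x)"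
  have vs: "vector_space s"
    by unfold_locales (simp_all add: s_def fun_eq_iff algebra_simps)
  interpret vector_space s by (rule vs)
  have lin: "Vector_Spaces.linear s s (\<lambda>x. F \<star> x)" for F
    unfolding Vector_Spaces.linear_iff using vs by (simp add: plus_fun_def conv_add_r conv_scale_r s_def)
  have subsp: "subspace {F \<star> x | x. x \<in> group_alg G}" for F
    unfolding subspace_def
  proof (intro conjI ballI allI)
    show "0 \<in> {F \<star> x | x. x \<in> group_alg G}"
      using conv_zero_r[of F] unfolding zero_fun_def group_alg_def by force
  next
    fix x y assume "x \<in> {F \<star> x | x. x \<in> group_alg G}" "y \<in> {F \<star> x | x. x \<in> group_alg G}"
    then obtain a b where "a \<in> group_alg G" "b \<in> group_alg G" "x = F \<star> a" "y = F \<star> b" by blast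
    moreover have "(\<lambda>g. a g + b g) \<in> group_alg G" using calculation unfolding group_alg_def by auto
    moreover have "x + y = F \<star> (\<lambda>g. a g + b g)" using calculation by (simp add: plus_fun_def conv_add_r)
    ultimately show "x + y \<in> {F \<star> x | x. x \<in> group_alg G}" by blast
  next
    fix c x assume "x \<in> {F \<star> x | x. x \<in> group_alg G}"
    then obtain a where "a \<in> group_alg G" "x = F \<star> a" by blast
    moreover have "(\<lambda>g. c * a g) \<in> group_alg G" using calculation unfolding group_alg_def by auto
    moreover have "s c x = F \<star> (\<lambda>g. c * a g)" using calculation by (simp add: s_def conv_scale_r)
    ultimately show "s c x \<in> {F \<star> x | x. x \<in> group_alg G}" by blast
  qed
  define Fb where "Fb = (\<lambda>g (x::'g). if x = g then (1::complex) else 0) ` G"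
  have finF: "finite Fb" unfolding Fb_def using fin by simp
  have gaspan: "group_alg G \<subseteq> span Fb"
  proof
    fix f assume f: "f \<in> group_alg G"
    have "f = (\<Sum>g\<in>G. s (f g) (\<lambda>x. if x = g then 1 else 0))"
    proof (rule ext)
      fix x show "f x = (\<Sum>g\<in>G. s (f g) (\<lambda>x. if x = g then 1 else 0)) x"
        unfolding sum_fun_apply s_def using f fin unfolding group_alg_def
        by (cases "x \<in> G") (simp_all add: if_distrib cong: if_cong)
    qed
    also have "\<dots> \<in> span Fb"
      by (rule span_sum, rule span_scale, rule span_base) (auto simp: Fb_def)
    finally show "f \<in> span Fb" .
  qed
  have imgT: "\<phi> ` S = T"
  proof (rule inj_inj_surj[OF vs, of \<phi> \<psi> S T Fb])
    show "Vector_Spaces.linear s s \<phi>" unfolding \<phi>_def by (rule lin)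
    show "Vector_Spaces.linear s s \<psi>" unfolding \<psi>_def by (rule lin)
    show "subspace S" unfolding S_def by (rule subsp)
    show "subspace T" unfolding T_def by (rule subsp)
  qed (use finF gaspan Sga Tga injS injT psiT phiS in auto)
  have bij: "bij_betw \<phi> S T" unfolding bij_betw_def using injS imgT by blast
  have lin3: "\<phi> (\<lambda>g. x g + y g) = (\<lambda>g. \<phi> x g + \<phi> y g)" for x y unfolding \<phi>_def by (rule conv_add_r)
  have lin4: "\<phi> (\<lambda>g. c * x g) = (\<lambda>g. c * \<phi> x g)" for c x unfolding \<phi>_def by (rule conv_scale_r)
  have bimod: "conv G (conv G l x) a \<in> S \<and> \<phi> (conv G (conv G l x) a) = conv G (conv G l (\<phi> x)) a"
    if l: "l \<in> group_alg L" and x: "x \<in> S" and a: "a \<in> group_alg G" for l x a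
  proof -
    obtain b where b: "b \<in> group_alg G" "x = idem Uw \<star> idem Vw \<star> b" using x unfolding S_def by blast
    have cR: "l \<star> (idem H \<star> X) = idem H \<star> (l \<star> X)" if "sg H" "\<And>d h. d \<in> L \<Longrightarrow> h \<in> H \<Longrightarrow> d * h * iv d \<in> H" for H X
      using idem_comm[OF sL that l] by (metis conv_assoc)
    note cs = cR[OF sV invV] cR[OF sUw invUw] cR[OF sVw invVw]
    have eq: "l \<star> x \<star> a = idem Uw \<star> idem Vw \<star> (l \<star> (b \<star> a))"
      unfolding b by (simp add: A cs)
    have "l \<star> x \<star> a \<in> S" unfolding eq S_def using conv_ga by blast
    moreover have "\<phi> (l \<star> x \<star> a) = l \<star> \<phi> x \<star> a" unfolding \<phi>_def b by (simp add: A cs)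
    ultimately show ?thesis by blast
  qed
  show ?thesis
  proof (intro conjI)
    show "\<forall>x\<in>S. \<phi> x \<in> T" using part1 by blast
    show "bij_betw \<phi> S T" by (rule bij)
    show "\<forall>x\<in>S. \<forall>y\<in>S. \<phi> (\<lambda>g. x g + y g) = (\<lambda>g. \<phi> x g + \<phi> y g)" using lin3 by blast
    show "\<forall>c::complex. \<forall>x\<in>S. \<phi> (\<lambda>g. c * x g) = (\<lambda>g. c * \<phi> x g)" using lin4 by blast
    show "\<forall>l\<in>group_alg L. \<forall>x\<in>S. \<forall>a\<in>group_alg G.
          conv G (conv G l x) a \<in> S \<and> \<phi> (conv G (conv G l x) a) = conv G (conv G l (\<phi> x)) a"
      using bimod by blast
  qed
qed

end

lemma mult_entry: assumes "A \<in> carrier_mat n n" "B \<in> carrier_mat n n" "i < n" "j < n"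
  shows "(A * B) $$ (i,j) = (\<Sum>k<n. A $$ (i,k) * B $$ (k,j))"
  using assms by (auto simp: scalar_prod_def atLeast0LessThan intro!: sum.cong)

lemma finite_carrier: "finite (carrier_mat n m :: 'a::finite mat set)"
proof -
  let ?I = "{..<n} \<times> {..<m}"
  have "carrier_mat n m \<subseteq> (\<lambda>f. mat n m f) ` (PiE ?I (\<lambda>_. (UNIV :: 'a set)))"
  proof
    fix A :: "'a mat" assume A: "A \<in> carrier_mat n m"
    have "A = mat n m (restrict (\<lambda>p. A $$ p) ?I)"
      by (rule eq_matI) (use A in auto)
    moreover have "restrict (\<lambda>p. A $$ p) ?I \<in> PiE ?I (\<lambda>_. UNIV)" by simp
    ultimately show "A \<in> (\<lambda>f. mat n m f) ` (PiE ?I (\<lambda>_. UNIV))" by blast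
  qed
  moreover have "finite (PiE ?I (\<lambda>_. (UNIV :: 'a set)))" by (rule finite_PiE) auto
  ultimately show ?thesis using finite_subset by blast
qed

lemma minv_props: assumes "A \<in> GL n"
  shows "minv A \<in> carrier_mat n n" "A * minv A = 1\<^sub>m n" "minv A * A = 1\<^sub>m n"
proof -
  have A: "A \<in> carrier_mat n n" "invertible_mat A" using assms unfolding GL_def by auto
  then obtain B where B: "inverts_mat A B" "inverts_mat B A" unfolding invertible_mat_def by blast
  have "inverts_mat A (minv A) \<and> inverts_mat (minv A) A" unfolding minv_def
    by (rule someI[of _ B]) (use B in auto)
  hence 1: "A * minv A = 1\<^sub>m n" and 2: "minv A * A = 1\<^sub>m (dim_row (minv A))"
    using A(1) unfolding inverts_mat_def by auto
  have c: "dim_col (minv A) = n" using arg_cong[OF 1, of dim_col] by simp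
  have r: "dim_row (minv A) = n" using arg_cong[OF 2, of dim_col] A(1) by simp
  show "minv A \<in> carrier_mat n n" using r c by auto
  show "A * minv A = 1\<^sub>m n" by (rule 1)
  show "minv A * A = 1\<^sub>m n" using 2 r by simp
qed

lemma GL_I: assumes "A \<in> carrier_mat n n" "B \<in> carrier_mat n n" "A * B = 1\<^sub>m n" "B * A = 1\<^sub>m n"
  shows "A \<in> GL n"
  unfolding GL_def invertible_mat_def inverts_mat_def using assms by auto

lemma GL_carrier: "A \<in> GL n \<Longrightarrow> A \<in> carrier_mat n n" unfolding GL_def by auto

lemma GL_mult: assumes a: "A \<in> GL n" and b: "B \<in> GL n" shows "A * B \<in> GL n"
proof -
  note mA = minv_props[OF a] and mB = minv_props[OF b]
  have cA: "A \<in> carrier_mat n n" and cB: "B \<in> carrier_mat n n" using a b GL_carrier by auto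
  have m1: "minv B * minv A \<in> carrier_mat n n" using mA(1) mB(1) by simp
  have "B * (minv B * minv A) = (B * minv B) * minv A" using assoc_mult_mat[OF cB mB(1) mA(1)] by simp
  also have "\<dots> = minv A" using mB(2) mA(1) by simp
  finally have x1: "B * (minv B * minv A) = minv A" .
  have 1: "(A * B) * (minv B * minv A) = 1\<^sub>m n"
    using assoc_mult_mat[OF cA cB m1] x1 mA(2) by simp
  have "minv A * (A * B) = (minv A * A) * B" using assoc_mult_mat[OF mA(1) cA cB] by simp
  also have "\<dots> = B" using mA(3) cB by simp
  finally have x2: "minv A * (A * B) = B" .
  have 2: "(minv B * minv A) * (A * B) = 1\<^sub>m n"
    using assoc_mult_mat[OF mB(1) mA(1) mult_carrier_mat[OF cA cB]] x2 mB(3) by simp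
  show ?thesis by (rule GL_I[OF _ _ 1 2]) (use cA cB mA mB in auto)
qed

lemma fgrp_GL: "fgrp (GL n :: 'a::{comm_ring_1,finite} mat set) (1\<^sub>m n) minv"
proof
  show "finite (GL n :: 'a mat set)"
    using finite_carrier[of n n] finite_subset[of "GL n" "carrier_mat n n"] GL_carrier by blast
  show "1\<^sub>m n \<in> (GL n :: 'a mat set)" by (rule GL_I[of _ n "1\<^sub>m n"]) auto
  fix x y z :: "'a mat"
  show "x \<in> GL n \<Longrightarrow> y \<in> GL n \<Longrightarrow> x * y \<in> GL n" by (rule GL_mult)
  show "x \<in> GL n \<Longrightarrow> y \<in> GL n \<Longrightarrow> z \<in> GL n \<Longrightarrow> x * y * z = x * (y * z)"
    using GL_carrier by (metis assoc_mult_mat)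
  show "x \<in> GL n \<Longrightarrow> 1\<^sub>m n * x = x" using GL_carrier by (metis left_mult_one_mat)
  show "x \<in> GL n \<Longrightarrow> x * 1\<^sub>m n = x" using GL_carrier by (metis right_mult_one_mat)
  show "x \<in> GL n \<Longrightarrow> minv x \<in> GL n"
    using minv_props GL_carrier by (metis GL_I)
  show "x \<in> GL n \<Longrightarrow> minv x * x = 1\<^sub>m n" using minv_props by blast
  show "x \<in> GL n \<Longrightarrow> x * minv x = 1\<^sub>m n" using minv_props by blast
qed

definition pat :: "nat \<Rightarrow> (nat \<Rightarrow> nat \<Rightarrow> bool) \<Rightarrow> 'a::comm_ring_1 mat set" where
  "pat n P = {A \<in> carrier_mat n n. (\<forall>i<n. A $$ (i,i) = 1) \<and> (\<forall>i<n. \<forall>j<n. i \<noteq> j \<longrightarrow> \<not> P i j \<longrightarrow> A $$ (i,j) = 0)}"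

definition strict :: "(nat \<Rightarrow> nat \<Rightarrow> bool) \<Rightarrow> bool" where
  "strict P \<longleftrightarrow> (\<forall>i j k. P i j \<longrightarrow> P j k \<longrightarrow> P i k) \<and> (\<forall>i j. P i j \<longrightarrow> \<not> P j i)"

lemma patD: assumes "A \<in> pat n P"
  shows "A \<in> carrier_mat n n" "i < n \<Longrightarrow> A $$ (i,i) = 1"
    "i < n \<Longrightarrow> j < n \<Longrightarrow> i \<noteq> j \<Longrightarrow> \<not> P i j \<Longrightarrow> A $$ (i,j) = 0"
  using assms unfolding pat_def by auto

lemma pat_cong: "(\<And>i j. P i j = Q i j) \<Longrightarrow> pat n P = pat n Q"
  unfolding pat_def by simp

lemma pat_mono: "(\<And>i j. P i j \<Longrightarrow> Q i j) \<Longrightarrow> pat n P \<subseteq> pat n Q"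
  unfolding pat_def by blast

lemma pat_one: "1\<^sub>m n \<in> pat n P"
  unfolding pat_def by auto

lemma pat_mult: assumes P: "strict P" and A: "A \<in> pat n P" and B: "B \<in> pat n P" shows "A * B \<in> pat n P"
proof -
  note cA = patD(1)[OF A] and cB = patD(1)[OF B]
  note dA = patD(2)[OF A] and dB = patD(2)[OF B]
  note zA = patD(3)[OF A] and zB = patD(3)[OF B]
  have diag: "(A*B)$$(i,i) = 1" if i: "i<n" for i
  proof -
    have "(A*B)$$(i,i) = (\<Sum>k<n. A$$(i,k) * B$$(k,i))" by (rule mult_entry[OF cA cB i i])
    also have "\<dots> = (\<Sum>k<n. if k = i then 1 else 0)"
    proof (rule sum.cong[OF refl])
      fix k assume k: "k \<in> {..<n}"
      show "A$$(i,k) * B$$(k,i) = (if k = i then 1 else 0)"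
      proof (cases "k = i")
        case True thus ?thesis using dA dB i by simp
      next
        case False
        show ?thesis
        proof (cases "P i k")
          case True then have "\<not> P k i" using P unfolding strict_def by blast
          thus ?thesis using zB[of k i] False k i by auto
        next
          case False2: False thus ?thesis using zA[of i k] False k i by auto
        qed
      qed
    qed
    also have "\<dots> = 1" using i by simp
    finally show ?thesis .
  qed
  have off: "(A*B)$$(i,j) = 0" if ij: "i<n" "j<n" "i\<noteq>j" "\<not>P i j" for i j
  proof -
    have "(A*B)$$(i,j) = (\<Sum>k<n. A$$(i,k) * B$$(k,j))" by (rule mult_entry[OF cA cB ij(1,2)])
    also have "\<dots> = 0"
    proof (rule sum.neutral, rule ballI)
      fix k assume k: "k \<in> {..<n}"
      show "A$$(i,k) * B$$(k,j) = 0"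
      proof (cases "k = i")
        case True thus ?thesis using zB[of i j] ij by simp
      next
        case ki: False
        show ?thesis
        proof (cases "k = j")
          case True thus ?thesis using zA[of i j] ij by simp
        next
          case kj: False
          show ?thesis
          proof (cases "P i k")
            case True
            hence "\<not> P k j" using ij(4) P unfolding strict_def by blast
            thus ?thesis using zB[of k j] k kj ij by auto
          next
            case False thus ?thesis using zA[of i k] k ki ij by auto
          qed
        qed
      qed
    qed
    finally show ?thesis .
  qed
  show ?thesis unfolding pat_def using cA cB diag off by auto
qed

lemma prod_list_ones: "prod_list (map (\<lambda>_. (1::'a::monoid_mult)) xs) = 1"
  by (induct xs) auto

lemma det1_GL: assumes A: "A \<in> carrier_mat n n" and d: "det A = 1" shows "A \<in> GL n"
proof -
  have e: "(1::'a) \<cdot>\<^sub>m 1\<^sub>m n = 1\<^sub>m n" by (rule eq_matI) auto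
  show ?thesis using adj_mat[OF A] d e by (intro GL_I[OF A, of "adj_mat A"]) auto
qed

lemma diag_ones: assumes "A \<in> carrier_mat n n" "\<And>i. i < n \<Longrightarrow> A $$ (i,i) = 1"
  shows "prod_list (diag_mat A) = 1"
proof -
  have "diag_mat A = map (\<lambda>_. 1) [0..<n]" unfolding diag_mat_def using assms by (intro map_cong) auto
  thus ?thesis by (simp add: prod_list_ones)
qed

lemma pat_upper: fixes A :: "'a::comm_ring_1 mat" assumes A: "A \<in> pat n (\<lambda>i j. i < j)"
  shows "A \<in> upper_uni n"
proof -
  note c = patD(1)[OF A]
  have "upper_triangular A" unfolding upper_triangular_def using patD(3)[OF A] c by auto
  hence "det A = 1" using det_upper_triangular[OF _ c] diag_ones[OF c patD(2)[OF A]] by simp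
  hence g: "A \<in> GL n" using det1_GL c by blast
  have "\<forall>i<n. A $$ (i,i) = 1" using patD(2)[OF A] by blast
  moreover have "\<forall>i<n. \<forall>j<n. j < i \<longrightarrow> A $$ (i,j) = 0" using patD(3)[OF A] by auto
  ultimately show "A \<in> upper_uni n" unfolding upper_uni_def using g by blast
qed

lemma pat_lower: fixes A :: "'a::comm_ring_1 mat" assumes A: "A \<in> pat n (\<lambda>i j. j < i)"
  shows "A \<in> lower_uni n"
proof -
  note c = patD(1)[OF A]
  have "det A = prod_list (diag_mat A)"
    by (rule det_lower_triangular[OF _ c]) (use patD(3)[OF A] in auto)
  hence "det A = 1" using diag_ones[OF c patD(2)[OF A]] by simp
  hence g: "A \<in> GL n" using det1_GL c by blast
  have "\<forall>i<n. A $$ (i,i) = 1" using patD(2)[OF A] by blast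
  moreover have "\<forall>i<n. \<forall>j<n. i < j \<longrightarrow> A $$ (i,j) = 0" using patD(3)[OF A] by auto
  ultimately show "A \<in> lower_uni n" unfolding lower_uni_def using g by blast
qed

lemma upper_eq: "upper_uni n = (pat n (\<lambda>i j. i < j) :: 'a::comm_ring_1 mat set)"
proof
  show "upper_uni n \<subseteq> pat n (\<lambda>i j. i < j)" unfolding upper_uni_def pat_def GL_def by auto
  show "pat n (\<lambda>i j. i < j) \<subseteq> upper_uni n" using pat_upper by blast
qed

lemma lower_eq: "lower_uni n = (pat n (\<lambda>i j. j < i) :: 'a::comm_ring_1 mat set)"
proof
  show "lower_uni n \<subseteq> pat n (\<lambda>i j. j < i)" unfolding lower_uni_def pat_def GL_def by auto
  show "pat n (\<lambda>i j. j < i) \<subseteq> lower_uni n" using pat_lower by blast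
qed

definition pm :: "(nat \<Rightarrow> nat) \<Rightarrow> nat \<Rightarrow> 'a::comm_ring_1 mat" where
  "pm \<sigma> n = mat n n (\<lambda>(i,j). if i = \<sigma> j then 1 else 0)"

lemma pm_carrier: "pm \<sigma> n \<in> carrier_mat n n" by (simp add: pm_def)
lemma pm_dim[simp]: "dim_row (pm \<sigma> n) = n" "dim_col (pm \<sigma> n) = n" by (simp_all add: pm_def)

context fixes \<sigma> :: "nat \<Rightarrow> nat" and n :: nat assumes \<sigma>: "\<sigma> permutes {..<n}"
begin

lemma sig_lt: "i < n \<Longrightarrow> \<sigma> i < n" using permutes_in_image[OF \<sigma>] by simp
lemma isig_lt: "i < n \<Longrightarrow> Hilbert_Choice.inv \<sigma> i < n" using permutes_in_image[OF permutes_inv[OF \<sigma>]] by simp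
lemma sig_inv1: "\<sigma> (Hilbert_Choice.inv \<sigma> x) = x" using permutes_inverses(1)[OF \<sigma>] .
lemma sig_inv2: "Hilbert_Choice.inv \<sigma> (\<sigma> x) = x" using permutes_inverses(2)[OF \<sigma>] .

lemma mult_pm_r: assumes h: "h \<in> carrier_mat n n" and ij: "i < n" "j < n"
  shows "(h * pm \<sigma> n) $$ (i,j) = h $$ (i, \<sigma> j)"
proof -
  have "(h * pm \<sigma> n) $$ (i,j) = (\<Sum>k<n. h $$ (i,k) * pm \<sigma> n $$ (k,j))"
    by (rule mult_entry[OF h pm_carrier ij])
  also have "\<dots> = (\<Sum>k<n. if k = \<sigma> j then h $$ (i,k) else 0)"
    by (rule sum.cong) (use ij in \<open>auto simp: pm_def\<close>)
  also have "\<dots> = h $$ (i, \<sigma> j)" using sig_lt[OF ij(2)] by simp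
  finally show ?thesis .
qed

lemma mult_pmT_l: assumes h: "h \<in> carrier_mat n n" and ij: "i < n" "j < n"
  shows "(transpose_mat (pm \<sigma> n) * h) $$ (i,j) = h $$ (\<sigma> i, j)"
proof -
  have c: "transpose_mat (pm \<sigma> n) \<in> carrier_mat n n" using pm_carrier by simp
  have "(transpose_mat (pm \<sigma> n) * h) $$ (i,j) = (\<Sum>k<n. transpose_mat (pm \<sigma> n) $$ (i,k) * h $$ (k,j))"
    by (rule mult_entry[OF c h ij])
  also have "\<dots> = (\<Sum>k<n. if k = \<sigma> i then h $$ (k,j) else 0)"
    by (rule sum.cong) (use ij in \<open>auto simp: pm_def\<close>)
  also have "\<dots> = h $$ (\<sigma> i, j)" using sig_lt[OF ij(1)] by simp
  finally show ?thesis .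
qed

lemma mult_pmT_r: assumes h: "h \<in> carrier_mat n n" and ij: "i < n" "j < n"
  shows "(h * transpose_mat (pm \<sigma> n)) $$ (i,j) = h $$ (i, Hilbert_Choice.inv \<sigma> j)"
proof -
  have c: "transpose_mat (pm \<sigma> n) \<in> carrier_mat n n" using pm_carrier by simp
  have "(h * transpose_mat (pm \<sigma> n)) $$ (i,j) = (\<Sum>k<n. h $$ (i,k) * transpose_mat (pm \<sigma> n) $$ (k,j))"
    by (rule mult_entry[OF h c ij])
  also have "\<dots> = (\<Sum>k<n. if k = Hilbert_Choice.inv \<sigma> j then h $$ (i,k) else 0)"
  proof (rule sum.cong[OF refl])
    fix k assume k: "k \<in> {..<n}"
    have "(j = \<sigma> k) = (k = Hilbert_Choice.inv \<sigma> j)" using sig_inv1 sig_inv2 by metis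
    thus "h $$ (i,k) * transpose_mat (pm \<sigma> n) $$ (k,j) = (if k = Hilbert_Choice.inv \<sigma> j then h $$ (i,k) else 0)"
      using k ij by (auto simp: pm_def)
  qed
  also have "\<dots> = h $$ (i, Hilbert_Choice.inv \<sigma> j)" using isig_lt[OF ij(2)] by simp
  finally show ?thesis .
qed

lemma conj_entry: assumes h: "h \<in> carrier_mat n n" and ij: "i < n" "j < n"
  shows "(transpose_mat (pm \<sigma> n) * h * pm \<sigma> n) $$ (i,j) = h $$ (\<sigma> i, \<sigma> j)"
proof -
  have t: "transpose_mat (pm \<sigma> n) \<in> carrier_mat n n" using pm_carrier[of \<sigma> n] by simp
  have c: "transpose_mat (pm \<sigma> n) * h \<in> carrier_mat n n" by (rule mult_carrier_mat[OF t h])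
  have "(transpose_mat (pm \<sigma> n) * h * pm \<sigma> n) $$ (i,j) = (transpose_mat (pm \<sigma> n) * h) $$ (i, \<sigma> j)"
    by (rule mult_pm_r[OF c ij])
  also have "\<dots> = h $$ (\<sigma> i, \<sigma> j)" by (rule mult_pmT_l[OF h ij(1) sig_lt[OF ij(2)]])
  finally show ?thesis .
qed

lemma pmT_pm: "transpose_mat (pm \<sigma> n) * pm \<sigma> n = (1\<^sub>m n :: 'a::comm_ring_1 mat)"
proof (rule eq_matI)
  fix i j assume ij: "i < dim_row (1\<^sub>m n :: 'a mat)" "j < dim_col (1\<^sub>m n :: 'a mat)"
  hence ij': "i < n" "j < n" by auto
  have "(transpose_mat (pm \<sigma> n) * pm \<sigma> n) $$ (i,j) = (pm \<sigma> n :: 'a mat) $$ (\<sigma> i, j)"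
    by (rule mult_pmT_l[OF pm_carrier ij'])
  also have "\<dots> = (if i = j then 1 else 0)"
    using ij' sig_lt[OF ij'(1)] permutes_inj[OF \<sigma>] by (auto simp: pm_def inj_eq)
  finally show "(transpose_mat (pm \<sigma> n) * pm \<sigma> n) $$ (i,j) = (1\<^sub>m n :: 'a mat) $$ (i,j)" using ij' by simp
qed (auto simp: pm_def)

lemma pm_pmT: "pm \<sigma> n * transpose_mat (pm \<sigma> n) = (1\<^sub>m n :: 'a::comm_ring_1 mat)"
proof (rule eq_matI)
  fix i j assume ij: "i < dim_row (1\<^sub>m n :: 'a mat)" "j < dim_col (1\<^sub>m n :: 'a mat)"
  hence ij': "i < n" "j < n" by auto
  have "(pm \<sigma> n * transpose_mat (pm \<sigma> n)) $$ (i,j) = (pm \<sigma> n :: 'a mat) $$ (i, Hilbert_Choice.inv \<sigma> j)"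
    by (rule mult_pmT_r[OF pm_carrier ij'])
  also have "\<dots> = (if i = j then 1 else 0)"
    using ij' isig_lt[OF ij'(2)] sig_inv1 by (auto simp: pm_def)
  finally show "(pm \<sigma> n * transpose_mat (pm \<sigma> n)) $$ (i,j) = (1\<^sub>m n :: 'a mat) $$ (i,j)" using ij' by simp
qed (auto simp: pm_def)

lemma pm_GL: "(pm \<sigma> n :: 'a::comm_ring_1 mat) \<in> GL n"
  by (rule GL_I[OF pm_carrier _ pm_pmT pmT_pm]) (simp add: pm_carrier)

lemma minv_pm: "minv (pm \<sigma> n :: 'a::comm_ring_1 mat) = transpose_mat (pm \<sigma> n)"
proof -
  have m: "minv (pm \<sigma> n :: 'a mat) \<in> carrier_mat n n" "pm \<sigma> n * minv (pm \<sigma> n :: 'a mat) = 1\<^sub>m n"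
    "minv (pm \<sigma> n :: 'a mat) * pm \<sigma> n = 1\<^sub>m n" using minv_props[OF pm_GL] by auto
  have t: "transpose_mat (pm \<sigma> n :: 'a mat) \<in> carrier_mat n n" using pm_carrier[of \<sigma> n] by simp
  have "minv (pm \<sigma> n :: 'a mat) = minv (pm \<sigma> n) * 1\<^sub>m n" by (rule sym, rule right_mult_one_mat[OF m(1)])
  also have "\<dots> = minv (pm \<sigma> n) * (pm \<sigma> n * transpose_mat (pm \<sigma> n))" by (simp only: pm_pmT)
  also have "\<dots> = (minv (pm \<sigma> n) * pm \<sigma> n) * transpose_mat (pm \<sigma> n)"
    by (rule assoc_mult_mat[OF m(1) pm_carrier t, symmetric])
  also have "\<dots> = transpose_mat (pm \<sigma> n)" using m(3) t by simp
  finally show ?thesis .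
qed

lemma conj_pat: "conj_grp (pm \<sigma> n) (pat n Q) = (pat n (\<lambda>i j. Q (\<sigma> i) (\<sigma> j)) :: 'a::comm_ring_1 mat set)"
proof
  show "conj_grp (pm \<sigma> n) (pat n Q) \<subseteq> (pat n (\<lambda>i j. Q (\<sigma> i) (\<sigma> j)) :: 'a mat set)"
  proof
    fix g :: "'a mat" assume "g \<in> conj_grp (pm \<sigma> n) (pat n Q)"
    then obtain h where h: "h \<in> pat n Q" and g: "g = transpose_mat (pm \<sigma> n) * h * pm \<sigma> n"
      unfolding conj_grp_def minv_pm by blast
    note c = patD(1)[OF h]
    have t: "transpose_mat (pm \<sigma> n) \<in> carrier_mat n n" using pm_carrier[of \<sigma> n] by simp
    have cg: "g \<in> carrier_mat n n" unfolding g by (rule mult_carrier_mat[OF mult_carrier_mat[OF t c] pm_carrier])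
    have "\<forall>i<n. g $$ (i,i) = 1" unfolding g using conj_entry[OF c] patD(2)[OF h] sig_lt by simp
    moreover have "\<forall>i<n. \<forall>j<n. i \<noteq> j \<longrightarrow> \<not> Q (\<sigma> i) (\<sigma> j) \<longrightarrow> g $$ (i,j) = 0"
    proof (intro allI impI)
      fix i j assume ij: "i < n" "j < n" "i \<noteq> j" "\<not> Q (\<sigma> i) (\<sigma> j)"
      have "\<sigma> i \<noteq> \<sigma> j" using ij(3) permutes_inj[OF \<sigma>] by (auto simp: inj_eq)
      thus "g $$ (i,j) = 0" unfolding g using conj_entry[OF c ij(1,2)] patD(3)[OF h sig_lt[OF ij(1)] sig_lt[OF ij(2)]] ij(4) by simp
    qed
    ultimately show "g \<in> pat n (\<lambda>i j. Q (\<sigma> i) (\<sigma> j))" unfolding pat_def using cg by blast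
  qed
  show "(pat n (\<lambda>i j. Q (\<sigma> i) (\<sigma> j)) :: 'a mat set) \<subseteq> conj_grp (pm \<sigma> n) (pat n Q)"
  proof
    fix g :: "'a mat" assume g: "g \<in> pat n (\<lambda>i j. Q (\<sigma> i) (\<sigma> j))"
    define h :: "'a mat" where "h = mat n n (\<lambda>(a,b). g $$ (Hilbert_Choice.inv \<sigma> a, Hilbert_Choice.inv \<sigma> b))"
    have ch: "h \<in> carrier_mat n n" unfolding h_def by simp
    have "\<forall>i<n. h $$ (i,i) = 1" unfolding h_def using patD(2)[OF g] isig_lt by simp
    moreover have "\<forall>a<n. \<forall>b<n. a \<noteq> b \<longrightarrow> \<not> Q a b \<longrightarrow> h $$ (a,b) = 0"
    proof (intro allI impI)
      fix a b assume ab: "a < n" "b < n" "a \<noteq> b" "\<not> Q a b"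
      have "Hilbert_Choice.inv \<sigma> a \<noteq> Hilbert_Choice.inv \<sigma> b" using ab(3) sig_inv1 by metis
      moreover have "\<not> Q (\<sigma> (Hilbert_Choice.inv \<sigma> a)) (\<sigma> (Hilbert_Choice.inv \<sigma> b))" using ab(4) sig_inv1 by simp
      ultimately show "h $$ (a,b) = 0" unfolding h_def
        using patD(3)[OF g isig_lt[OF ab(1)] isig_lt[OF ab(2)]] ab by simp
    qed
    ultimately have hp: "h \<in> pat n Q" unfolding pat_def using ch by blast
    have "transpose_mat (pm \<sigma> n) * h * pm \<sigma> n = g"
    proof (rule eq_matI)
      fix i j assume ij: "i < dim_row g" "j < dim_col g"
      hence ij': "i < n" "j < n" using patD(1)[OF g] by auto
      show "(transpose_mat (pm \<sigma> n) * h * pm \<sigma> n) $$ (i,j) = g $$ (i,j)"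
        using conj_entry[OF ch ij'] sig_lt[OF ij'(1)] sig_lt[OF ij'(2)] unfolding h_def by (simp add: sig_inv2)
    qed (use patD(1)[OF g] pm_carrier in auto)
    thus "g \<in> conj_grp (pm \<sigma> n) (pat n Q)" unfolding conj_grp_def minv_pm using hp by blast
  qed
qed

end

definition Phi :: "nat \<Rightarrow> (nat \<Rightarrow> nat \<Rightarrow> bool) \<Rightarrow> (nat \<times> nat) set" where
  "Phi n P = {(i,j). i < n \<and> j < n \<and> i \<noteq> j \<and> P i j}"

lemma finite_Phi: "finite (Phi n P)"
  by (rule finite_subset[of _ "{..<n} \<times> {..<n}"]) (auto simp: Phi_def)

lemma card_pat: "card (pat n P :: 'a::{comm_ring_1,finite} mat set) = card (UNIV :: 'a set) ^ card (Phi n P)"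
proof -
  let ?I = "Phi n P"
  define M where "M = (\<lambda>f::nat\<times>nat \<Rightarrow> 'a. mat n n (\<lambda>(i,j). if i = j then 1 else if (i,j) \<in> ?I then f (i,j) else 0))"
  have bij: "bij_betw M (PiE ?I (\<lambda>_. UNIV)) (pat n P)"
  proof (rule bij_betw_imageI)
    show "inj_on M (PiE ?I (\<lambda>_. UNIV))"
    proof (rule inj_onI)
      fix f g assume f: "f \<in> PiE ?I (\<lambda>_. UNIV)" and g: "g \<in> PiE ?I (\<lambda>_. UNIV)" and e: "M f = M g"
      show "f = g"
      proof (rule PiE_ext[OF f g])
        fix p assume p: "p \<in> ?I"
        obtain i j where ij: "p = (i,j)" "i<n" "j<n" "i\<noteq>j" "P i j" using p unfolding Phi_def by auto
        have "M f $$ (i,j) = M g $$ (i,j)" using e by simp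
        thus "f p = g p" using ij p unfolding M_def by simp
      qed
    qed
    show "M ` PiE ?I (\<lambda>_. UNIV) = pat n P"
    proof
      show "M ` PiE ?I (\<lambda>_. UNIV) \<subseteq> pat n P"
        unfolding M_def pat_def Phi_def by auto
      show "pat n P \<subseteq> M ` PiE ?I (\<lambda>_. UNIV)"
      proof
        fix A :: "'a mat" assume A: "A \<in> pat n P"
        have "A = M (restrict (\<lambda>p. A $$ p) ?I)"
        proof (rule eq_matI)
          fix i j assume ij: "i < dim_row (M (restrict (\<lambda>p. A $$ p) ?I))" "j < dim_col (M (restrict (\<lambda>p. A $$ p) ?I))"
          hence ij': "i < n" "j < n" unfolding M_def by auto
          show "A $$ (i,j) = M (restrict (\<lambda>p. A $$ p) ?I) $$ (i,j)"
            using ij' patD(2)[OF A] patD(3)[OF A ij'] unfolding M_def Phi_def by auto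
        qed (use patD(1)[OF A] in \<open>auto simp: M_def\<close>)
        moreover have "restrict (\<lambda>p. A $$ p) ?I \<in> PiE ?I (\<lambda>_. UNIV)" by simp
        ultimately show "A \<in> M ` PiE ?I (\<lambda>_. UNIV)" by blast
      qed
    qed
  qed
  have "card (pat n P :: 'a mat set) = card (PiE ?I (\<lambda>_. UNIV :: 'a set))" using bij_betw_same_card[OF bij] by simp
  also have "\<dots> = card (UNIV :: 'a set) ^ card ?I" by (simp add: card_PiE finite_Phi)
  finally show ?thesis .
qed

lemma pat_sg: assumes "strict P" "pat n P \<subseteq> (GL n :: 'a::{comm_ring_1,finite} mat set)"
  shows "fgrp.sg (GL n) (1\<^sub>m n) minv (pat n P :: 'a mat set)"
proof -
  interpret g: fgrp "GL n :: 'a mat set" "1\<^sub>m n" minv by (rule fgrp_GL)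
  show ?thesis by (rule g.sg_closed) (use assms pat_one pat_mult in auto)
qed

lemma pat_dec:
  fixes A B :: "nat \<Rightarrow> nat \<Rightarrow> bool"
  assumes sA: "strict A" and sB: "strict B" and tot: "\<And>i j. i<n \<Longrightarrow> j<n \<Longrightarrow> i\<noteq>j \<Longrightarrow> B i j \<or> B j i"
    and AG: "pat n A \<subseteq> (GL n :: 'a::{comm_ring_1,finite} mat set)"
  shows "conv (GL n) (idem (pat n (\<lambda>i j. A i j \<and> B i j) :: 'a mat set)) (idem (pat n (\<lambda>i j. A i j \<and> B j i)))
    = idem (pat n A)"
proof -
  interpret g: fgrp "GL n :: 'a mat set" "1\<^sub>m n" minv by (rule fgrp_GL)
  let ?H = "pat n (\<lambda>i j. A i j \<and> B i j) :: 'a mat set"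
  let ?K = "pat n (\<lambda>i j. A i j \<and> B j i) :: 'a mat set"
  let ?X = "pat n A :: 'a mat set"
  have sH: "strict (\<lambda>i j. A i j \<and> B i j)" using sA sB unfolding strict_def by blast
  have sK: "strict (\<lambda>i j. A i j \<and> B j i)" using sA sB unfolding strict_def by blast
  have HX: "?H \<subseteq> ?X" by (rule pat_mono) auto
  have KX: "?K \<subseteq> ?X" by (rule pat_mono) auto
  have X: "g.sg ?X" by (rule pat_sg[OF sA AG])
  have H: "g.sg ?H" by (rule pat_sg[OF sH]) (use HX AG in auto)
  have K: "g.sg ?K" by (rule pat_sg[OF sK]) (use KX AG in auto)
  have HK: "?H \<inter> ?K = {1\<^sub>m n}"
  proof
    show "?H \<inter> ?K \<subseteq> {1\<^sub>m n}"
    proof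
      fix M assume M: "M \<in> ?H \<inter> ?K"
      have MH: "M \<in> ?H" and MK: "M \<in> ?K" using M by auto
      have "M = 1\<^sub>m n"
      proof (rule eq_matI)
        fix i j assume ij: "i < dim_row (1\<^sub>m n :: 'a mat)" "j < dim_col (1\<^sub>m n :: 'a mat)"
        hence ij': "i < n" "j < n" by auto
        show "M $$ (i,j) = 1\<^sub>m n $$ (i,j)"
        proof (cases "i = j")
          case True thus ?thesis using patD(2)[OF MH] ij' by auto
        next
          case False
          show ?thesis
          proof (cases "A i j \<and> B i j")
            case True then have "\<not> (A i j \<and> B j i)" using sB unfolding strict_def by blast
            thus ?thesis using patD(3)[OF MK ij' False] ij' False by auto
          next
            case F2: False thus ?thesis using patD(3)[OF MH ij' False] ij' False by auto
          qed
        qed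
      qed (use patD(1)[OF MH] in auto)
      thus "M \<in> {1\<^sub>m n}" by simp
    qed
    show "{1\<^sub>m n} \<subseteq> ?H \<inter> ?K" using pat_one by auto
  qed
  have cX: "card ?X = card ?H * card ?K"
  proof -
    have un: "Phi n A = Phi n (\<lambda>i j. A i j \<and> B i j) \<union> Phi n (\<lambda>i j. A i j \<and> B j i)"
      using tot unfolding Phi_def by blast
    have di: "Phi n (\<lambda>i j. A i j \<and> B i j) \<inter> Phi n (\<lambda>i j. A i j \<and> B j i) = {}"
      using sB unfolding Phi_def strict_def by blast
    have "card (Phi n A) = card (Phi n (\<lambda>i j. A i j \<and> B i j)) + card (Phi n (\<lambda>i j. A i j \<and> B j i))"
      unfolding un by (rule card_Un_disjoint[OF finite_Phi finite_Phi di])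
    thus ?thesis unfolding card_pat by (simp add: power_add)
  qed
  show ?thesis by (rule g.idem_prod[OF H K X HX KX HK cX])
qed

lemma diag_entry_l: assumes d: "d \<in> carrier_mat n n" "\<And>i j. i<n \<Longrightarrow> j<n \<Longrightarrow> i\<noteq>j \<Longrightarrow> d$$(i,j) = 0"
  and M: "M \<in> carrier_mat n n" and ij: "i<n" "j<n"
  shows "(d * M) $$ (i,j) = d$$(i,i) * M$$(i,j)"
proof -
  have "(d*M)$$(i,j) = (\<Sum>k<n. d$$(i,k) * M$$(k,j))" by (rule mult_entry[OF d(1) M ij])
  also have "\<dots> = (\<Sum>k<n. if k = i then d$$(i,i) * M$$(i,j) else 0)"
    by (rule sum.cong[OF refl]) (use d ij in auto)
  also have "\<dots> = d$$(i,i) * M$$(i,j)" using ij by simp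
  finally show ?thesis .
qed

lemma diag_entry_r: assumes d: "d \<in> carrier_mat n n" "\<And>i j. i<n \<Longrightarrow> j<n \<Longrightarrow> i\<noteq>j \<Longrightarrow> d$$(i,j) = 0"
  and M: "M \<in> carrier_mat n n" and ij: "i<n" "j<n"
  shows "(M * d) $$ (i,j) = M$$(i,j) * d$$(j,j)"
proof -
  have "(M*d)$$(i,j) = (\<Sum>k<n. M$$(i,k) * d$$(k,j))" by (rule mult_entry[OF M d(1) ij])
  also have "\<dots> = (\<Sum>k<n. if k = j then M$$(i,j) * d$$(j,j) else 0)"
    by (rule sum.cong[OF refl]) (use d ij in auto)
  also have "\<dots> = M$$(i,j) * d$$(j,j)" using ij by simp
  finally show ?thesis .
qed

lemma diag_grpD: "d \<in> diag_grp n \<Longrightarrow> d \<in> GL n" "d \<in> diag_grp n \<Longrightarrow> d \<in> carrier_mat n n"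
  "d \<in> diag_grp n \<Longrightarrow> i<n \<Longrightarrow> j<n \<Longrightarrow> i\<noteq>j \<Longrightarrow> d$$(i,j) = 0"
  unfolding diag_grp_def GL_def by auto

lemma diag_sg: "fgrp.sg (GL n) (1\<^sub>m n) minv (diag_grp n :: 'a::{comm_ring_1,finite} mat set)"
proof -
  interpret g: fgrp "GL n :: 'a mat set" "1\<^sub>m n" minv by (rule fgrp_GL)
  show ?thesis
  proof (rule g.sg_closed)
    show "diag_grp n \<subseteq> (GL n :: 'a mat set)" unfolding diag_grp_def by auto
    show "1\<^sub>m n \<in> (diag_grp n :: 'a mat set)" unfolding diag_grp_def using g.eG by auto
    fix x y :: "'a mat" assume x: "x \<in> diag_grp n" and y: "y \<in> diag_grp n"
    have "x * y \<in> GL n" using GL_mult diag_grpD(1) x y by blast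
    moreover have "(x * y) $$ (i,j) = 0" if "i<n" "j<n" "i\<noteq>j" for i j
      using diag_entry_l[OF diag_grpD(2)[OF x] diag_grpD(3)[OF x] diag_grpD(2)[OF y] that(1,2)]
        diag_grpD(3)[OF y that] by simp
    ultimately show "x * y \<in> diag_grp n" unfolding diag_grp_def by auto
  qed
qed

lemma diag_inv: assumes d: "d \<in> diag_grp n" and h: "h \<in> pat n Q"
  shows "d * h * minv d \<in> (pat n Q :: 'a::{comm_ring_1,finite} mat set)"
proof -
  interpret g: fgrp "GL n :: 'a mat set" "1\<^sub>m n" minv by (rule fgrp_GL)
  have e: "minv d \<in> diag_grp n" using g.sgD(4)[OF diag_sg d] .
  note dc = diag_grpD(2)[OF d] and dz = diag_grpD(3)[OF d]
  note ec = diag_grpD(2)[OF e] and ez = diag_grpD(3)[OF e]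
  note hc = patD(1)[OF h]
  have dh: "d * h \<in> carrier_mat n n" using dc hc by simp
  have ent: "(d * h * minv d) $$ (i,j) = d$$(i,i) * h$$(i,j) * minv d $$ (j,j)" if ij: "i<n" "j<n" for i j
    using diag_entry_r[OF ec ez dh ij] diag_entry_l[OF dc dz hc ij] by simp
  have de: "d $$ (i,i) * minv d $$ (i,i) = 1" if i: "i<n" for i
  proof -
    have "(d * minv d) $$ (i,i) = d$$(i,i) * minv d $$ (i,i)" using diag_entry_l[OF dc dz ec i i] .
    moreover have "d * minv d = 1\<^sub>m n" using minv_props(2) diag_grpD(1)[OF d] .
    ultimately show ?thesis using i by simp
  qed
  have "\<forall>i<n. (d * h * minv d) $$ (i,i) = 1"
    using ent patD(2)[OF h] de by (simp add: mult.commute)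
  moreover have "\<forall>i<n. \<forall>j<n. i \<noteq> j \<longrightarrow> \<not> Q i j \<longrightarrow> (d * h * minv d) $$ (i,j) = 0"
    using ent patD(3)[OF h] by simp
  moreover have "d * h * minv d \<in> carrier_mat n n" using dh ec by simp
  ultimately show ?thesis unfolding pat_def by blast
qed

theorem lemma3p5:
  fixes n :: nat and w :: "'r::{comm_ring_1, finite} mat"
  assumes "local_ring TYPE('r)"
    and "w \<in> perm_mats n"
  defines "G \<equiv> GL n :: 'r mat set"
  defines "S \<equiv> {conv G (conv G (idem (conj_grp w (upper_uni n))) (idem (conj_grp w (lower_uni n)))) x
                 | x. x \<in> group_alg G}"
  defines "T \<equiv> {conv G (conv G (idem (lower_uni n)) (idem (upper_uni n))) x | x. x \<in> group_alg G}"
  defines "\<phi> \<equiv> (\<lambda>x. conv G (idem (lower_uni n)) x)"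
  shows "(\<forall>x\<in>S. \<phi> x \<in> T)
    \<and> bij_betw \<phi> S T
    \<and> (\<forall>x\<in>S. \<forall>y\<in>S. \<phi> (\<lambda>g. x g + y g) = (\<lambda>g. \<phi> x g + \<phi> y g))
    \<and> (\<forall>c::complex. \<forall>x\<in>S. \<phi> (\<lambda>g. c * x g) = (\<lambda>g. c * \<phi> x g))
    \<and> (\<forall>l\<in>group_alg (diag_grp n). \<forall>x\<in>S. \<forall>a\<in>group_alg G.
          conv G (conv G l x) a \<in> S \<and> \<phi> (conv G (conv G l x) a) = conv G (conv G l (\<phi> x)) a)"
proof -
  interpret g: fgrp "GL n :: 'r mat set" "1\<^sub>m n" minv by (rule fgrp_GL)
  obtain \<sigma> where \<sigma>: "\<sigma> permutes {..<n}" and w: "w = pm \<sigma> n"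
    using assms(2) unfolding perm_mats_def pm_def by blast
  have inj: "\<sigma> i = \<sigma> j \<Longrightarrow> i = j" for i j using permutes_inj[OF \<sigma>] by (auto simp: inj_eq)
  have wG: "w \<in> GL n" unfolding w by (rule pm_GL[OF \<sigma>])
  define U :: "'r mat set" where "U = pat n (\<lambda>i j. i < j)"
  define V :: "'r mat set" where "V = pat n (\<lambda>i j. j < i)"
  define Uw :: "'r mat set" where "Uw = pat n (\<lambda>i j. \<sigma> i < \<sigma> j)"
  define Vw :: "'r mat set" where "Vw = pat n (\<lambda>i j. \<sigma> j < \<sigma> i)"
  define B1 :: "'r mat set" where "B1 = pat n (\<lambda>i j. \<sigma> i < \<sigma> j \<and> i < j)"
  define B2 :: "'r mat set" where "B2 = pat n (\<lambda>i j. \<sigma> i < \<sigma> j \<and> j < i)"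
  define C1 :: "'r mat set" where "C1 = pat n (\<lambda>i j. \<sigma> j < \<sigma> i \<and> i < j)"
  define C2 :: "'r mat set" where "C2 = pat n (\<lambda>i j. \<sigma> j < \<sigma> i \<and> j < i)"
  have eU: "upper_uni n = U" unfolding U_def by (rule upper_eq)
  have eV: "lower_uni n = V" unfolding V_def by (rule lower_eq)
  have eUw: "conj_grp w (upper_uni n) = Uw" unfolding eU U_def Uw_def w by (rule conj_pat[OF \<sigma>])
  have eVw: "conj_grp w (lower_uni n) = Vw" unfolding eV V_def Vw_def w by (rule conj_pat[OF \<sigma>])
  have UG: "U \<subseteq> GL n" using eU unfolding upper_uni_def by auto
  have VG: "V \<subseteq> GL n" using eV unfolding lower_uni_def by auto
  have conjG: "conj_grp w H \<subseteq> GL n" if "H \<subseteq> GL n" for H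
    unfolding conj_grp_def using that wG g.cl g.ivG by blast
  have UwG: "Uw \<subseteq> GL n" using conjG[OF UG[folded eU]] eUw by simp
  have VwG: "Vw \<subseteq> GL n" using conjG[OF VG[folded eV]] eVw by simp
  have s1: "strict (\<lambda>i j::nat. i < j)" "strict (\<lambda>i j::nat. j < i)"
    "strict (\<lambda>i j. \<sigma> i < \<sigma> j)" "strict (\<lambda>i j. \<sigma> j < \<sigma> i)"
    "strict (\<lambda>i j. \<sigma> i < \<sigma> j \<and> i < j)" "strict (\<lambda>i j. \<sigma> i < \<sigma> j \<and> j < i)"
    "strict (\<lambda>i j. \<sigma> j < \<sigma> i \<and> i < j)" "strict (\<lambda>i j. \<sigma> j < \<sigma> i \<and> j < i)"
    unfolding strict_def by auto
  have tot1: "i < j \<or> j < i" if "i \<noteq> j" for i j :: nat using that by auto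
  have tot2: "\<sigma> i < \<sigma> j \<or> \<sigma> j < \<sigma> i" if "i \<noteq> j" for i j using that inj by (meson linorder_neqE_nat)
  have B1U: "B1 \<subseteq> U" "B1 \<subseteq> Uw" unfolding B1_def U_def Uw_def by (rule pat_mono, simp)+
  have B2V: "B2 \<subseteq> V" "B2 \<subseteq> Uw" unfolding B2_def V_def Uw_def by (rule pat_mono, simp)+
  have C1U: "C1 \<subseteq> U" "C1 \<subseteq> Vw" unfolding C1_def U_def Vw_def by (rule pat_mono, simp)+
  have C2V: "C2 \<subseteq> V" "C2 \<subseteq> Vw" unfolding C2_def V_def Vw_def by (rule pat_mono, simp)+
  have sU: "g.sg U" unfolding U_def by (rule pat_sg[OF s1(1)]) (use UG U_def in simp)
  have sV: "g.sg V" unfolding V_def by (rule pat_sg[OF s1(2)]) (use VG V_def in simp)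
  have sUw: "g.sg Uw" unfolding Uw_def by (rule pat_sg[OF s1(3)]) (use UwG Uw_def in simp)
  have sVw: "g.sg Vw" unfolding Vw_def by (rule pat_sg[OF s1(4)]) (use VwG Vw_def in simp)
  have sB1: "g.sg B1" unfolding B1_def by (rule pat_sg[OF s1(5)]) (use B1U UG B1_def in blast)
  have sB2: "g.sg B2" unfolding B2_def by (rule pat_sg[OF s1(6)]) (use B2V VG B2_def in blast)
  have sC1: "g.sg C1" unfolding C1_def by (rule pat_sg[OF s1(7)]) (use C1U UG C1_def in blast)
  have sC2: "g.sg C2" unfolding C2_def by (rule pat_sg[OF s1(8)]) (use C2V VG C2_def in blast)
  have dUw: "conv (GL n) (idem B2) (idem B1) = idem Uw"
    using pat_dec[OF s1(3) s1(2) _ UwG[unfolded Uw_def]] tot1 unfolding B1_def B2_def Uw_def by simp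
  have dVw: "conv (GL n) (idem C1) (idem C2) = idem Vw"
    using pat_dec[OF s1(4) s1(1) _ VwG[unfolded Vw_def]] tot1 unfolding C1_def C2_def Vw_def by simp
  have eB1: "pat n (\<lambda>i j. i < j \<and> \<sigma> i < \<sigma> j) = B1" unfolding B1_def by (rule pat_cong) auto
  have eC1: "pat n (\<lambda>i j. i < j \<and> \<sigma> j < \<sigma> i) = C1" unfolding C1_def by (rule pat_cong) auto
  have eB2: "pat n (\<lambda>i j. j < i \<and> \<sigma> i < \<sigma> j) = B2" unfolding B2_def by (rule pat_cong) auto
  have eC2: "pat n (\<lambda>i j. j < i \<and> \<sigma> j < \<sigma> i) = C2" unfolding C2_def by (rule pat_cong) auto
  have dU: "conv (GL n) (idem B1) (idem C1) = idem U"
    using pat_dec[OF s1(1) s1(3) _ UG[unfolded U_def]] tot2 unfolding U_def eB1 eC1 by simp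
  have dV: "conv (GL n) (idem C2) (idem B2) = idem V"
    using pat_dec[OF s1(2) s1(4) _ VG[unfolded V_def]] tot2 unfolding V_def eB2 eC2 by simp
  have iV: "d * h * minv d \<in> V" if "d \<in> diag_grp n" "h \<in> V" for d h
    using diag_inv that unfolding V_def by blast
  have iUw: "d * h * minv d \<in> Uw" if "d \<in> diag_grp n" "h \<in> Uw" for d h
    using diag_inv that unfolding Uw_def by blast
  have iVw: "d * h * minv d \<in> Vw" if "d \<in> diag_grp n" "h \<in> Vw" for d h
    using diag_inv that unfolding Vw_def by blast
  note main = g.main_abs[OF sU sV sUw sVw sB1 sB2 sC1 sC2 diag_sg B2V(1) B2V(2) C2V(1) C2V(2)
      dUw dVw dU dV iV iUw iVw]
  show ?thesis unfolding S_def T_def \<phi>_def G_def by (rule main[folded eUw eVw eU eV])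
qed

end
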